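(* Let $1\le p<\infty$ and let $v=(v_n)_{n\in\mathbb{Z}}$ be a sequence of positive numbers with $\sup_{n\in\mathbb{Z}}v_n/v_{n+1}<\infty$, so that the backward shift $B(x_n)_{n\in\mathbb{Z}}=(x_{n+1})_{n\in\mathbb{Z}}$ is a bounded operator on $Y=\ell^p(\mathbb{Z},v)$. Then the following are equivalent: (i) the set of all vectors in $Y$ whose $B$-orbits are distributionally near to $0$ is residual in $Y$; (ii) there exists a nonzero vector $x\in Y$ whose $B$-orbit is distributionally near to $0$; (iii) there exists $A\subseteq\mathbb{N}$ with $\overline{\mathrm{dens}}(A)=1$ such that $\lim_{n\in A}v_{-n}=0$.
   Context: $\ell^p(\mathbb{Z},v)=\{(x_n)_{n\in\mathbb{Z}}:\sum_{n\in\mathbb{Z}}|x_n|^pv_n<\infty\}$ with norm $(\sum_{n}|x_n|^pv_n)^{1/p}$. For $A\subseteq\mathbb{N}$, $\overline{\mathrm{dens}}(A)=\limsup_{N}\frac{\operatorname{card}(A\cap[1,N])}{N}$. The orbit of $x$ under $T$ is distributionally near to $0$ if there is $A\subseteq\mathbb{N}$ with $\overline{\mathrm{dens}}(A)=1$ and $\|T^nx\|\to0$ as $n\to\infty$, $n\in A$. *)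

theory Defs
  imports "HOL-Analysis.Analysis"
begin

definition lp_weighted :: "real \<Rightarrow> (int \<Rightarrow> real) \<Rightarrow> (int \<Rightarrow> real) set" where
  "lp_weighted p v = {x. (\<lambda>k. \<bar>x k\<bar> powr p * v k) summable_on UNIV}"

definition wnorm :: "real \<Rightarrow> (int \<Rightarrow> real) \<Rightarrow> (int \<Rightarrow> real) \<Rightarrow> real" where
  "wnorm p v x = (\<Sum>\<^sub>\<infinity>k. \<bar>x k\<bar> powr p * v k) powr (1 / p)"

definition lp_topology :: "real \<Rightarrow> (int \<Rightarrow> real) \<Rightarrow> (int \<Rightarrow> real) topology" where
  "lp_topology p v = Metric_space.mtopology (lp_weighted p v) (\<lambda>x y. wnorm p v (x - y))"

definition residual_in :: "'a topology \<Rightarrow> 'a set \<Rightarrow> bool" where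
  "residual_in X S \<longleftrightarrow> (\<exists>\<F>. countable \<F> \<and>
      (\<forall>U\<in>\<F>. openin X U \<and> X closure_of U = topspace X) \<and>
      topspace X \<inter> \<Inter>\<F> \<subseteq> S)"

definition bshift :: "(int \<Rightarrow> real) \<Rightarrow> (int \<Rightarrow> real)" where
  "bshift x = (\<lambda>k. x (k + 1))"

definition upper_dens :: "nat set \<Rightarrow> ereal" where
  "upper_dens A = limsup (\<lambda>N. ereal (real (card (A \<inter> {1..N})) / real N))"

definition distr_near_zero :: "real \<Rightarrow> (int \<Rightarrow> real) \<Rightarrow> (int \<Rightarrow> real) \<Rightarrow> bool" where
  "distr_near_zero p v x \<longleftrightarrow> (\<exists>A. upper_dens A = 1 \<and>
     filterlim (\<lambda>n. wnorm p v ((bshift ^^ n) x)) (nhds 0) (inf sequentially (principal A)))"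

end

theory Submission
  imports Defs
begin


definition ud1 :: "nat set \<Rightarrow> bool" where
  "ud1 A \<longleftrightarrow> (\<forall>e>0. \<forall>N. \<exists>n\<ge>N. real (card (A \<inter> {1..n})) > (1 - e) * real n)"

lemma card_le_n: "card (A \<inter> {1..n}) \<le> n"
  using card_mono[of "{1..n}" "A \<inter> {1..n}"] by auto

lemma ud_iff: "upper_dens A = 1 \<longleftrightarrow> ud1 A"
proof -
  define X where "X n = ereal (real (card (A \<inter> {1..n})) / real n)" for n
  have ud: "upper_dens A = limsup X" unfolding upper_dens_def X_def[abs_def] ..
  have X1: "X n \<le> 1" for n
    using card_le_n[of A n] by (cases "n = 0") (auto simp: X_def divide_le_eq)
  have le1: "limsup X \<le> 1" by (rule Limsup_bounded) (simp add: X1)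
  show ?thesis
  proof
    assume h: "upper_dens A = 1"
    show "ud1 A" unfolding ud1_def
    proof (rule ccontr)
      assume "\<not> (\<forall>e>0. \<forall>N. \<exists>n\<ge>N. (1 - e) * real n < real (card (A \<inter> {1..n})))"
      then obtain e N where e: "e > 0" and N: "\<And>n. n \<ge> N \<Longrightarrow> real (card (A \<inter> {1..n})) \<le> (1 - e) * real n"
        by (auto simp: not_less)
      have "eventually (\<lambda>n. X n \<le> ereal (1 - e)) sequentially"
        unfolding eventually_sequentially
      proof (intro exI allI impI)
        fix n assume "n \<ge> max N 1"
        then show "X n \<le> ereal (1 - e)" using N[of n] by (auto simp: X_def divide_le_eq)
      qed
      then have "limsup X \<le> ereal (1 - e)" by (rule Limsup_bounded)
      then show False using h ud e by simp
    qed
  next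
    assume u: "ud1 A"
    have "\<not> limsup X < 1"
    proof
      assume lt: "limsup X < 1"
      then obtain y where y: "limsup X < y" "y < 1" using dense by blast
      have "eventually (\<lambda>n. y > X n) sequentially"
        using Limsup_le_iff[of sequentially X "limsup X"] y by auto
      then obtain N0 where N0: "\<And>n. n \<ge> N0 \<Longrightarrow> X n < y" by (auto simp: eventually_sequentially)
      have "y \<noteq> -\<infinity>" using y by auto
      moreover have "y \<noteq> \<infinity>" using y by auto
      ultimately obtain r where r: "y = ereal r" by (cases y) auto
      have "r < 1" using y r by simp
      then have r1: "1 - r > 0" by simp
      obtain n where n: "n \<ge> max N0 1" "real (card (A \<inter> {1..n})) > (1 - (1 - r)) * real n"
        using u[unfolded ud1_def, rule_format, OF r1, of "max N0 1"] by blast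
      then have "X n > y" by (auto simp: X_def r field_simps)
      then show False using N0[of n] n by auto
    qed
    then show "upper_dens A = 1" using le1 ud by auto
  qed
qed


lemma ud_shift:
  assumes u: "ud1 A" and AB: "\<And>m. m \<in> A \<Longrightarrow> m \<ge> m0 \<Longrightarrow> m + i \<in> B"
  shows "ud1 B"
  unfolding ud1_def
proof (intro allI impI)
  fix e :: real and N :: nat assume e: "e > 0"
  define L where "L = m0 + i"
  define N' where "N' = max N (nat \<lceil>2 * real L / e\<rceil>)"
  obtain n where n: "n \<ge> N'" "real (card (A \<inter> {1..n})) > (1 - e/2) * real n"
    using u e unfolding ud1_def by (meson half_gt_zero)
  define P where "P = {m \<in> A. 1 \<le> m \<and> m0 \<le> m \<and> m + i \<le> n}"
  have sub: "A \<inter> {1..n} \<subseteq> P \<union> {..<m0} \<union> {n - i<..n}"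
    unfolding P_def by auto
  have "card (A \<inter> {1..n}) \<le> card (P \<union> {..<m0} \<union> {n - i<..n})"
  proof (rule card_mono[OF _ sub])
    have "finite P" by (rule finite_subset[of _ "{..n}"]) (auto simp: P_def)
    then show "finite (P \<union> {..<m0} \<union> {n - i<..n})" by simp
  qed
  also have "\<dots> \<le> card P + card {..<m0} + card {n - i<..n}"
    by (meson add_le_mono card_Un_le le_refl order_trans)
  also have "card {n - i<..n} \<le> i" by simp
  also have "card P = card ((\<lambda>m. m + i) ` P)" by (simp add: card_image inj_on_def)
  also have "\<dots> \<le> card (B \<inter> {1..n})"
    by (rule card_mono) (auto simp: P_def AB)
  finally have c: "real (card (A \<inter> {1..n})) \<le> real (card (B \<inter> {1..n})) + real L"
    by (simp add: L_def)
  have "real n \<ge> 2 * real L / e" using n(1) unfolding N'_def by linarith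
  then have "e / 2 * real n \<ge> real L" using e by (simp add: field_simps)
  then have "real (card (B \<inter> {1..n})) > (1 - e) * real n"
    using c n(2) by (simp add: algebra_simps)
  then show "\<exists>n\<ge>N. real (card (B \<inter> {1..n})) > (1 - e) * real n"
    using n(1) by (intro exI[of _ n]) (auto simp: N'_def)
qed

definition nextN :: "(nat \<Rightarrow> nat set) \<Rightarrow> nat \<Rightarrow> nat \<Rightarrow> nat" where
  "nextN E k m = (SOME n. n \<ge> Suc k * m + 1 \<and> real (card (E k \<inter> {1..n})) > (1 - 1 / real (Suc k)) * real n)"

fun seqN :: "(nat \<Rightarrow> nat set) \<Rightarrow> nat \<Rightarrow> nat" where
  "seqN E 0 = 0"
| "seqN E (Suc k) = nextN E k (seqN E k)"

lemma diag:
  assumes dec: "\<And>k. E (Suc k) \<subseteq> E k" and u: "\<And>k. ud1 (E k)"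
  shows "\<exists>A. ud1 A \<and> (\<forall>k. \<exists>N. \<forall>n\<in>A. n \<ge> N \<longrightarrow> n \<in> E k)"
proof -
  define Ns where "Ns = seqN E"
  have nx: "nextN E k m \<ge> Suc k * m + 1 \<and> real (card (E k \<inter> {1..nextN E k m})) > (1 - 1 / real (Suc k)) * real (nextN E k m)" for k m
  proof -
    have "\<exists>n. n \<ge> Suc k * m + 1 \<and> real (card (E k \<inter> {1..n})) > (1 - 1 / real (Suc k)) * real n"
    proof -
      have "1 / real (Suc k) > 0" by simp
      from u[of k, unfolded ud1_def, rule_format, OF this, of "Suc k * m + 1"]
      show ?thesis by blast
    qed
    then show ?thesis unfolding nextN_def by (rule someI_ex)
  qed
  have Ns1: "Ns (Suc k) \<ge> Suc k * Ns k + 1" for k using nx by (simp add: Ns_def)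
  have Ns2: "real (card (E k \<inter> {1..Ns (Suc k)})) > (1 - 1 / real (Suc k)) * real (Ns (Suc k))" for k
    using nx by (simp add: Ns_def)
  have smono: "strict_mono Ns"
  proof (rule strict_monoI_Suc)
    fix k
    have "Suc k * Ns k \<ge> Ns k" by simp
    then show "Ns k < Ns (Suc k)" using Ns1[of k] by linarith
  qed
  have Nge: "Ns k \<ge> k" for k using smono by (rule strict_mono_imp_increasing)
  have Emono: "j \<le> k \<Longrightarrow> E k \<subseteq> E j" for j k
    using lift_Suc_antimono_le[of E, OF dec] by blast
  define A where "A = (\<Union>k. E k \<inter> {Ns k<..Ns (Suc k)})"
  have tail: "\<forall>k. \<exists>N. \<forall>n\<in>A. n \<ge> N \<longrightarrow> n \<in> E k"
  proof
    fix j
    show "\<exists>N. \<forall>n\<in>A. n \<ge> N \<longrightarrow> n \<in> E j"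
    proof (intro exI ballI impI)
      fix n assume "n \<in> A" "n \<ge> Ns j + 1"
      then obtain k where k: "n \<in> E k" "Ns k < n" "n \<le> Ns (Suc k)" by (auto simp: A_def)
      have "j \<le> k"
      proof (rule ccontr)
        assume "\<not> j \<le> k"
        then have "Suc k \<le> j" by simp
        then have "Ns (Suc k) \<le> Ns j" using smono by (simp add: strict_mono_less_eq)
        then show False using k \<open>n \<ge> Ns j + 1\<close> by simp
      qed
      then show "n \<in> E j" using Emono k by blast
    qed
  qed
  have "ud1 A"
    unfolding ud1_def
  proof (intro allI impI)
    fix e :: real and N0 :: nat assume e: "e > 0"
    obtain k0 :: nat where k0: "real k0 > 2 / e" using reals_Archimedean2 by blast
    define k where "k = max k0 N0"
    have k1: "2 / real (Suc k) < e"
    proof -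
      have "real (Suc k) > 2 / e" using k0 by (simp add: k_def)
      then show ?thesis using e by (simp add: field_simps)
    qed
    define n where "n = Ns (Suc k)"
    have nN: "n \<ge> N0" using Nge[of "Suc k"] by (simp add: n_def k_def)
    have s1: "E k \<inter> {Ns k<..n} \<subseteq> A \<inter> {1..n}" by (auto simp: A_def n_def)
    have s2: "E k \<inter> {1..n} \<subseteq> (E k \<inter> {Ns k<..n}) \<union> {1..Ns k}" by auto
    have "card (E k \<inter> {1..n}) \<le> card ((E k \<inter> {Ns k<..n}) \<union> {1..Ns k})"
      by (rule card_mono[OF _ s2]) auto
    also have "\<dots> \<le> card (E k \<inter> {Ns k<..n}) + card {1..Ns k}" by (rule card_Un_le)
    also have "card (E k \<inter> {Ns k<..n}) \<le> card (A \<inter> {1..n})" by (rule card_mono[OF _ s1]) auto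
    finally have c: "real (card (E k \<inter> {1..n})) \<le> real (card (A \<inter> {1..n})) + real (Ns k)" by simp
    have nk: "real (Ns k) \<le> real n / real (Suc k)"
    proof -
      have "Suc k * Ns k \<le> n" using Ns1[of k] unfolding n_def by linarith
      then have "real (Suc k) * real (Ns k) \<le> real n" by (metis of_nat_le_iff of_nat_mult)
      then show ?thesis by (simp add: le_divide_eq mult.commute)
    qed
    have h1: "real (card (A \<inter> {1..n})) > (1 - 1 / real (Suc k)) * real n - real n / real (Suc k)"
      using c nk Ns2[of k] unfolding n_def by linarith
    have h2: "(1 - 1 / real (Suc k)) * real n - real n / real (Suc k) = (1 - 2 / real (Suc k)) * real n"
      by (simp add: algebra_simps)
    have h3: "(1 - e) * real n \<le> (1 - 2 / real (Suc k)) * real n" using k1 by (intro mult_right_mono) auto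
    have "real (card (A \<inter> {1..n})) > (1 - e) * real n" using h1 h2 h3 by linarith
    then show "\<exists>n\<ge>N0. real (card (A \<inter> {1..n})) > (1 - e) * real n" using nN by (intro exI[of _ n] conjI)
  qed
  then show ?thesis using tail by blast
qed

lemma conv_pow:
  fixes p s t l :: real
  assumes "1 \<le> p" "0 \<le> s" "0 \<le> t" "0 \<le> l" "l \<le> 1"
  shows "(l * s + (1 - l) * t) powr p \<le> l * s powr p + (1-l) * t powr p"
proof (cases "s = 0 \<or> t = 0")
  case True
  have aux: "(m*u) powr p \<le> m * u powr p" if "0 \<le> m" "m \<le> 1" "0 \<le> u" for m u :: real
  proof -
    have "(m*u) powr p = m powr p * u powr p" using that by (simp add: powr_mult)
    also have "m powr p \<le> m powr 1" using powr_mono'[of 1 p m] that assms by auto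
    hence "m powr p * u powr p \<le> m * u powr p" using that
      by (metis mult_right_mono powr_ge_zero powr_one_eq_one powr_one_gt_zero_iff powr_zero_eq_one)
    finally show ?thesis .
  qed
  show ?thesis
  proof (cases "s = 0")
    case True
    then show ?thesis using aux[of "1-l" t] assms by (simp)
  next
    case False
    then have "t = 0" using True by auto
    then show ?thesis using aux[of l s] assms False by simp
  qed
next
  case False
  then have st: "s > 0" "t > 0" using assms by auto
  have "convex_on {0<..} (\<lambda>x::real. x powr p)" using powr_convex assms(1) .
  from convex_onD[OF this, of "1-l" s t] st assms
  show ?thesis by (simp add: algebra_simps)
qed

lemma aux2: "0 \<le> (A::real) \<Longrightarrow> 0 \<le> B \<Longrightarrow> (1/2) * A + (1 - 1/2) * B \<le> A + B"
  by simp

lemma pow_add_le: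
  fixes p a b :: real
  assumes "1 \<le> p"
  shows "\<bar>a+b\<bar> powr p \<le> 2 powr p * (\<bar>a\<bar> powr p + \<bar>b\<bar> powr p)"
proof -
  have "\<bar>a+b\<bar> powr p \<le> (2 * ((1/2)*\<bar>a\<bar> + (1 - 1/2)*\<bar>b\<bar>)) powr p"
    using assms by (intro powr_mono2) auto
  also have "\<dots> = 2 powr p * ((1/2)*\<bar>a\<bar> + (1 - 1/2)*\<bar>b\<bar>) powr p"
    by (subst powr_mult) auto
  also have "\<dots> \<le> 2 powr p * ((1/2) * \<bar>a\<bar> powr p + (1 - 1/2) * \<bar>b\<bar> powr p)"
    using conv_pow[OF assms, of "\<bar>a\<bar>" "\<bar>b\<bar>" "1/2"] by (intro mult_left_mono) auto
  also have "\<dots> \<le> 2 powr p * (\<bar>a\<bar> powr p + \<bar>b\<bar> powr p)"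
  proof (rule mult_left_mono)
    show "(1/2) * \<bar>a\<bar> powr p + (1 - 1/2) * \<bar>b\<bar> powr p \<le> \<bar>a\<bar> powr p + \<bar>b\<bar> powr p"
      using aux2[OF powr_ge_zero[of "\<bar>a\<bar>" p] powr_ge_zero[of "\<bar>b\<bar>" p]] .
  qed simp
  finally show ?thesis .
qed

locale wsp =
  fixes p :: real and v :: "int \<Rightarrow> real"
  assumes p1: "1 \<le> p"
    and vpos: "\<And>n. v n > 0"
    and vbdd: "bdd_above (range (\<lambda>n. v n / v (n + 1)))"
begin

definition T :: "(int \<Rightarrow> real) \<Rightarrow> int \<Rightarrow> real" where
  "T x k = \<bar>x k\<bar> powr p * v k"

definition S :: "(int \<Rightarrow> real) \<Rightarrow> real" where
  "S x = infsum (T x) UNIV"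

abbreviation "Y \<equiv> lp_weighted p v"

lemma inY: "x \<in> Y \<longleftrightarrow> T x summable_on UNIV"
  by (simp add: lp_weighted_def T_def[abs_def])

lemma wn: "wnorm p v x = S x powr (1/p)"
  by (simp add: wnorm_def S_def T_def[abs_def])

lemma T_nonneg: "T x k \<ge> 0"
  using vpos[of k] by (simp add: T_def)

lemma S_nonneg: "S x \<ge> 0"
  unfolding S_def by (rule infsum_nonneg) (simp add: T_nonneg)

lemma p0: "p > 0" using p1 by simp

lemma S_wn: "S x = wnorm p v x powr p"
  using S_nonneg[of x] p0 by (simp add: wn powr_powr)

lemma T_le_S: "x \<in> Y \<Longrightarrow> T x k \<le> S x"
  unfolding S_def inY
  using finite_sum_le_infsum[of "T x" UNIV "{k}"] T_nonneg by simp

lemma S_zero: "x \<in> Y \<Longrightarrow> S x = 0 \<Longrightarrow> x = (\<lambda>_. 0)"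
proof
  fix k assume "x \<in> Y" "S x = 0"
  then have "T x k = 0"
    using nonneg_infsum_le_0D[of "T x" UNIV k] T_nonneg by (auto simp: S_def inY)
  then show "x k = 0" using vpos[of k] by (simp add: T_def)
qed

lemma S_0[simp]: "S (\<lambda>_. 0) = 0"
  by (simp add: S_def T_def[abs_def])

lemma Y_uminus: "x \<in> Y \<Longrightarrow> - x \<in> Y"
  by (simp add: inY T_def[abs_def])

lemma S_uminus: "S (- x) = S x"
  by (simp add: S_def T_def[abs_def])

lemma Y_add: assumes "x \<in> Y" "y \<in> Y" shows "(\<lambda>k. x k + y k) \<in> Y"
proof -
  have "(\<lambda>k. 2 powr p * (T x k + T y k)) summable_on UNIV"
    using assms by (intro summable_on_cmult_right summable_on_add) (auto simp: inY)
  then show ?thesis unfolding inY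
  proof (rule summable_on_comparison_test)
    fix k
    show "T (\<lambda>k. x k + y k) k \<le> 2 powr p * (T x k + T y k)"
      using mult_right_mono[OF pow_add_le[OF p1, of "x k" "y k"] less_imp_le[OF vpos[of k]]]
      by (simp add: T_def distrib_left distrib_right mult.assoc)
  qed (simp add: T_nonneg)
qed

lemma Y_diff: "x \<in> Y \<Longrightarrow> y \<in> Y \<Longrightarrow> x - y \<in> Y"
  using Y_add[of x "-y"] Y_uminus by (simp add: fun_diff_def)

lemma zero_Y: "(\<lambda>_. 0) \<in> Y"
  by (simp add: inY T_def[abs_def])

lemma wn_nonneg: "wnorm p v x \<ge> 0" by (simp add: wn)

lemma wn_zero: "x \<in> Y \<Longrightarrow> wnorm p v x = 0 \<Longrightarrow> x = (\<lambda>_. 0)"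
  using S_zero[of x] S_nonneg[of x] by (simp add: wn)

lemma S_sum_lin:
  assumes "x \<in> Y" "y \<in> Y"
  shows "infsum (\<lambda>k. c1 * T x k + c2 * T y k) UNIV = c1 * S x + c2 * S y"
  using assms unfolding inY S_def
  by (subst infsum_add) (auto intro!: summable_on_cmult_right simp: infsum_cmult_right)

lemma mink:
  assumes "x \<in> Y" "y \<in> Y"
  shows "wnorm p v (\<lambda>k. x k + y k) \<le> wnorm p v x + wnorm p v y"
proof -
  define a where "a = wnorm p v x"
  define b where "b = wnorm p v y"
  have a0: "a \<ge> 0" and b0: "b \<ge> 0" by (simp_all add: a_def b_def wn_nonneg)
  show ?thesis
  proof (cases "a = 0 \<or> b = 0")
    case True
    then show ?thesis
    proof
      assume "a = 0" then have "x = (\<lambda>_. 0)" using wn_zero assms a_def by auto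
      then show ?thesis by (simp add: wn_nonneg)
    next
      assume "b = 0" then have "y = (\<lambda>_. 0)" using wn_zero assms b_def by auto
      then show ?thesis by (simp add: wn_nonneg)
    qed
  next
    case False
    then have ap: "a > 0" and bp: "b > 0" using a0 b0 by auto
    define l where "l = a / (a + b)"
    have l0: "0 \<le> l" "l \<le> 1" using ap bp by (auto simp: l_def)
    have l1: "1 - l = b / (a + b)" using ap bp by (simp add: l_def field_simps)
    have Sx: "S x = a powr p" and Sy: "S y = b powr p" using S_wn a_def b_def by auto
    have pw: "T (\<lambda>k. x k + y k) k \<le> (a+b) powr p * (l / a powr p) * T x k + (a+b) powr p * ((1-l) / b powr p) * T y k" for k
    proof -
      have "\<bar>x k + y k\<bar> / (a+b) \<le> l * (\<bar>x k\<bar> / a) + (1 - l) * (\<bar>y k\<bar> / b)"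
      proof -
        have nz: "a \<noteq> 0" "b \<noteq> 0" "a + b \<noteq> 0" using ap bp by auto
        have e1: "l * (\<bar>x k\<bar> / a) = \<bar>x k\<bar> / (a+b)" using nz by (simp add: l_def)
        have e2: "(1 - l) * (\<bar>y k\<bar> / b) = \<bar>y k\<bar> / (a+b)" using nz by (simp add: l1)
        have "\<bar>x k + y k\<bar> / (a+b) \<le> (\<bar>x k\<bar> + \<bar>y k\<bar>) / (a+b)"
          using ap bp by (intro divide_right_mono abs_triangle_ineq) auto
        then show ?thesis unfolding e1 e2 by (simp add: add_divide_distrib)
      qed
      then have "(\<bar>x k + y k\<bar> / (a+b)) powr p \<le> (l * (\<bar>x k\<bar> / a) + (1 - l) * (\<bar>y k\<bar> / b)) powr p"
        using ap bp p0 by (intro powr_mono2) auto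
      also have "\<dots> \<le> l * (\<bar>x k\<bar> / a) powr p + (1 - l) * (\<bar>y k\<bar> / b) powr p"
        using conv_pow[OF p1, of "\<bar>x k\<bar> / a" "\<bar>y k\<bar> / b" l] l0 ap bp by simp
      finally have "\<bar>x k + y k\<bar> powr p / (a+b) powr p \<le> l * (\<bar>x k\<bar> powr p / a powr p) + (1 - l) * (\<bar>y k\<bar> powr p / b powr p)"
        using ap bp by (simp add: powr_divide)
      then have "\<bar>x k + y k\<bar> powr p \<le> (a+b) powr p * (l * (\<bar>x k\<bar> powr p / a powr p) + (1 - l) * (\<bar>y k\<bar> powr p / b powr p))"
        using ap bp by (simp add: divide_le_eq mult.commute)
      then have "\<bar>x k + y k\<bar> powr p * v k \<le> (a+b) powr p * (l * (\<bar>x k\<bar> powr p / a powr p) + (1 - l) * (\<bar>y k\<bar> powr p / b powr p)) * v k"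
        using vpos[of k] by (intro mult_right_mono) auto
      then show ?thesis by (simp add: T_def algebra_simps)
    qed
    have "S (\<lambda>k. x k + y k) \<le> infsum (\<lambda>k. (a+b) powr p * (l / a powr p) * T x k + (a+b) powr p * ((1-l) / b powr p) * T y k) UNIV"
      unfolding S_def
    proof (rule infsum_mono)
      show "T (\<lambda>k. x k + y k) summable_on UNIV" using Y_add[OF assms] by (simp add: inY)
      show "(\<lambda>k. (a+b) powr p * (l / a powr p) * T x k + (a+b) powr p * ((1-l) / b powr p) * T y k) summable_on UNIV"
        using assms unfolding inY by (intro summable_on_add summable_on_cmult_right)
    qed (rule pw)
    also have "\<dots> = (a+b) powr p * (l / a powr p) * S x + (a+b) powr p * ((1-l) / b powr p) * S y"
      by (rule S_sum_lin[OF assms])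
    also have "\<dots> = (a+b) powr p * ((l / a powr p) * S x) + (a+b) powr p * (((1-l) / b powr p) * S y)"
      by (simp add: mult.assoc)
    also have "(l / a powr p) * S x = l" using ap by (simp add: Sx)
    also have "((1-l) / b powr p) * S y = 1 - l" using bp by (simp add: Sy)
    also have "(a+b) powr p * l + (a+b) powr p * (1 - l) = (a+b) powr p"
      by (simp add: algebra_simps)
    finally have "S (\<lambda>k. x k + y k) powr (1/p) \<le> ((a+b) powr p) powr (1/p)"
      using p0 S_nonneg by (intro powr_mono2) auto
    then show ?thesis using p0 ap bp by (simp add: wn[symmetric] powr_powr a_def b_def)
  qed
qed

lemma S_commute: "S (x - y) = S (y - x)"
  by (simp add: S_def T_def[abs_def] fun_diff_def abs_minus_commute)

lemma metric: "Metric_space Y (\<lambda>x y. wnorm p v (x - y))"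
proof
  show "0 \<le> wnorm p v (x - y)" for x y by (rule wn_nonneg)
  show "wnorm p v (x - y) = wnorm p v (y - x)" for x y by (simp add: wn S_commute)
  show "(wnorm p v (x - y) = 0) = (x = y)" if "x \<in> Y" "y \<in> Y" for x y
  proof
    assume "wnorm p v (x - y) = 0"
    then have "x - y = (\<lambda>_. 0)" using wn_zero Y_diff that by blast
    then show "x = y" by (metis eq_iff_diff_eq_0 fun_diff_def ext)
  qed (simp add: fun_diff_def wn)
  show "wnorm p v (x - z) \<le> wnorm p v (x - y) + wnorm p v (y - z)" if "x \<in> Y" "y \<in> Y" "z \<in> Y" for x y z
  proof -
    have "x - z = (\<lambda>k. (x - y) k + (y - z) k)" by (simp add: fun_diff_def)
    then show ?thesis using mink[OF Y_diff Y_diff] that by metis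
  qed
qed

end

sublocale wsp \<subseteq> MS: Metric_space "lp_weighted p v" "\<lambda>x y. wnorm p v (x - y)"
  by (rule metric)

context wsp begin

lemma topo: "lp_topology p v = MS.mtopology"
  by (simp add: lp_topology_def)

lemma coord_small:
  assumes "x \<in> Y" "wnorm p v x < e * v k powr (1/p)" "e > 0"
  shows "\<bar>x k\<bar> < e"
proof (rule ccontr)
  assume "\<not> \<bar>x k\<bar> < e"
  then have "e powr p \<le> \<bar>x k\<bar> powr p" using p0 assms(3) by (intro powr_mono2) auto
  then have "e powr p * v k \<le> T x k" using vpos[of k] by (simp add: T_def mult_right_mono)
  also have "\<dots> \<le> S x" by (rule T_le_S[OF assms(1)])
  also have "\<dots> = wnorm p v x powr p" by (rule S_wn)
  also have "\<dots> < (e * v k powr (1/p)) powr p"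
    using assms p0 wn_nonneg by (intro powr_less_mono2) auto
  also have "\<dots> = e powr p * v k"
    using p0 vpos[of k] assms(3) by (simp add: powr_mult powr_powr)
  finally show False by simp
qed

lemma complete: "MS.mcomplete"
  unfolding MS.mcomplete_def
proof (intro allI impI)
  fix \<sigma> assume C: "MS.MCauchy \<sigma>"
  then have sY: "\<sigma> n \<in> Y" for n by (auto simp: MS.MCauchy_def)
  have Cd: "\<exists>N. \<forall>n n'. N \<le> n \<longrightarrow> N \<le> n' \<longrightarrow> wnorm p v (\<sigma> n - \<sigma> n') < e" if "e > 0" for e
    using C that by (auto simp: MS.MCauchy_def)
  have cc: "convergent (\<lambda>n. \<sigma> n k)" for k
  proof -
    have "Cauchy (\<lambda>n. \<sigma> n k)"
    proof (rule CauchyI)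
      fix e :: real assume e: "e > 0"
      have "e * v k powr (1/p) > 0" using e vpos[of k] by simp
      from Cd[OF this] obtain N where N: "\<And>n n'. N \<le> n \<Longrightarrow> N \<le> n' \<Longrightarrow> wnorm p v (\<sigma> n - \<sigma> n') < e * v k powr (1/p)"
        by blast
      show "\<exists>M. \<forall>m\<ge>M. \<forall>n\<ge>M. norm (\<sigma> m k - \<sigma> n k) < e"
        using coord_small[OF Y_diff[OF sY sY] N e] by (auto simp: fun_diff_def)
    qed
    then show ?thesis by (simp add: Cauchy_convergent_iff)
  qed
  define z where "z k = lim (\<lambda>n. \<sigma> n k)" for k
  have zl: "(\<lambda>n. \<sigma> n k) \<longlonglongrightarrow> z k" for k
    using cc[of k] by (simp add: z_def convergent_LIMSEQ_iff)
  have main: "\<exists>N. \<forall>n\<ge>N. \<sigma> n - z \<in> Y \<and> S (\<sigma> n - z) \<le> e powr p" if e: "e > 0" for e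
  proof -
    obtain N where N: "\<And>n n'. N \<le> n \<Longrightarrow> N \<le> n' \<Longrightarrow> wnorm p v (\<sigma> n - \<sigma> n') < e"
      using Cd[OF e] by blast
    have "\<sigma> n - z \<in> Y \<and> S (\<sigma> n - z) \<le> e powr p" if n: "n \<ge> N" for n
    proof -
      have fs: "sum (T (\<sigma> n - z)) F \<le> e powr p" if F: "finite F" for F
      proof (rule LIMSEQ_le_const2)
        show "(\<lambda>m. sum (T (\<sigma> n - \<sigma> m)) F) \<longlonglongrightarrow> sum (T (\<sigma> n - z)) F"
          unfolding T_def fun_diff_def
          by (intro tendsto_intros zl) (auto simp: p0)
        show "\<exists>M. \<forall>m\<ge>M. sum (T (\<sigma> n - \<sigma> m)) F \<le> e powr p"
        proof (intro exI allI impI)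
          fix m assume m: "m \<ge> N"
          have "sum (T (\<sigma> n - \<sigma> m)) F \<le> S (\<sigma> n - \<sigma> m)"
            unfolding S_def using Y_diff[OF sY sY, of n m] F
            by (intro finite_sum_le_infsum) (auto simp: inY T_nonneg)
          also have "\<dots> = wnorm p v (\<sigma> n - \<sigma> m) powr p" by (rule S_wn)
          also have "\<dots> \<le> e powr p" using N[OF n m] p0 wn_nonneg by (intro powr_mono2) auto
          finally show "sum (T (\<sigma> n - \<sigma> m)) F \<le> e powr p" .
        qed
      qed
      have sm: "T (\<sigma> n - z) summable_on UNIV"
        by (rule nonneg_bdd_above_summable_on) (auto simp: T_nonneg bdd_above_def intro!: exI[of _ "e powr p"] fs)
      moreover have "S (\<sigma> n - z) \<le> e powr p"
        unfolding S_def by (rule infsum_le_finite_sums[OF sm fs]) auto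
      ultimately show ?thesis by (simp add: inY)
    qed
    then show ?thesis by blast
  qed
  have zY: "z \<in> Y"
  proof -
    obtain N where "\<sigma> N - z \<in> Y" using main[of 1] by auto
    from Y_diff[OF sY[of N] this] show ?thesis by (simp add: fun_diff_def)
  qed
  show "\<exists>x. limitin MS.mtopology \<sigma> x sequentially"
  proof (intro exI)
    show "limitin MS.mtopology \<sigma> z sequentially"
      unfolding MS.limitin_metric
    proof (intro conjI zY allI impI)
      fix e :: real assume e: "e > 0"
      obtain N where N: "\<And>n. n \<ge> N \<Longrightarrow> S (\<sigma> n - z) \<le> (e/2) powr p" using main[of "e/2"] e by auto
      show "\<forall>\<^sub>F n in sequentially. \<sigma> n \<in> Y \<and> wnorm p v (\<sigma> n - z) < e"
        unfolding eventually_sequentially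
      proof (intro exI allI impI conjI sY)
        fix n assume "n \<ge> N"
        then have "S (\<sigma> n - z) powr (1/p) \<le> ((e/2) powr p) powr (1/p)"
          using N S_nonneg p0 by (intro powr_mono2) auto
        also have "\<dots> = e/2" using e p0 by (simp add: powr_powr)
        finally show "wnorm p v (\<sigma> n - z) < e" using e by (simp add: wn)
      qed
    qed
  qed
qed


definition cb :: real where "cb = max 1 (Sup (range (\<lambda>n. v n / v (n + 1))))"

lemma cb1: "cb \<ge> 1" by (simp add: cb_def)

lemma v_step: "v n \<le> cb * v (n + 1)"
proof -
  have "v n / v (n+1) \<le> Sup (range (\<lambda>n. v n / v (n + 1)))"
    using vbdd by (intro cSUP_upper) auto
  also have "\<dots> \<le> cb" by (simp add: cb_def)
  finally show ?thesis using vpos[of "n+1"] by (simp add: divide_le_eq)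
qed

lemma vmono_nat: "v a \<le> cb ^ m * v (a + int m)"
proof (induction m)
  case (Suc m)
  have "v a \<le> cb ^ m * v (a + int m)" by (rule Suc)
  also have "\<dots> \<le> cb ^ m * (cb * v (a + int m + 1))"
    using v_step cb1 by (intro mult_left_mono) auto
  finally show ?case by (simp add: algebra_simps)
qed simp

lemma vmono: "a \<le> b \<Longrightarrow> v a \<le> cb ^ nat (b - a) * v b"
  using vmono_nat[of a "nat (b - a)"] by simp

lemma bpow: "(bshift ^^ n) x = (\<lambda>k. x (k + int n))"
  by (induction n) (auto simp: bshift_def algebra_simps)

lemma reidx:
  "infsum (T (\<lambda>k. x (k + int n))) UNIV = infsum (\<lambda>j. \<bar>x j\<bar> powr p * v (j - int n)) UNIV"
  "T (\<lambda>k. x (k + int n)) summable_on UNIV \<longleftrightarrow> (\<lambda>j. \<bar>x j\<bar> powr p * v (j - int n)) summable_on UNIV"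
proof -
  have b: "bij_betw (\<lambda>k. k + int n) UNIV UNIV"
    by (rule bij_betwI[of _ _ _ "\<lambda>k. k - int n"]) auto
  show "infsum (T (\<lambda>k. x (k + int n))) UNIV = infsum (\<lambda>j. \<bar>x j\<bar> powr p * v (j - int n)) UNIV"
    using infsum_reindex_bij_betw[OF b, of "\<lambda>j. \<bar>x j\<bar> powr p * v (j - int n)"] by (simp add: T_def[abs_def])
  show "T (\<lambda>k. x (k + int n)) summable_on UNIV \<longleftrightarrow> (\<lambda>j. \<bar>x j\<bar> powr p * v (j - int n)) summable_on UNIV"
    using summable_on_reindex_bij_betw[OF b, of "\<lambda>j. \<bar>x j\<bar> powr p * v (j - int n)"] by (simp add: T_def[abs_def])
qed

lemma shift_Y:
  assumes "x \<in> Y"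
  shows "(\<lambda>k. x (k + int n)) \<in> Y" "S (\<lambda>k. x (k + int n)) \<le> cb ^ n * S x"
proof -
  have le: "\<bar>x j\<bar> powr p * v (j - int n) \<le> cb ^ n * T x j" for j
  proof -
    have "\<bar>x j\<bar> powr p * v (j - int n) \<le> \<bar>x j\<bar> powr p * (cb ^ n * v j)"
      using vmono[of "j - int n" j] by (intro mult_left_mono) auto
    then show ?thesis by (simp add: T_def algebra_simps)
  qed
  have sm: "(\<lambda>j. cb ^ n * T x j) summable_on UNIV"
    using assms by (intro summable_on_cmult_right) (simp add: inY)
  have sm2: "(\<lambda>j. \<bar>x j\<bar> powr p * v (j - int n)) summable_on UNIV"
    by (rule summable_on_comparison_test[OF sm le]) (simp add: vpos less_imp_le)
  then show "(\<lambda>k. x (k + int n)) \<in> Y" by (simp add: inY reidx)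
  have "S (\<lambda>k. x (k + int n)) = infsum (\<lambda>j. \<bar>x j\<bar> powr p * v (j - int n)) UNIV"
    by (simp add: S_def reidx)
  also have "\<dots> \<le> infsum (\<lambda>j. cb ^ n * T x j) UNIV"
    by (rule infsum_mono[OF sm2 sm le])
  also have "\<dots> = cb ^ n * S x" by (simp add: S_def infsum_cmult_right')
  finally show "S (\<lambda>k. x (k + int n)) \<le> cb ^ n * S x" .
qed

lemma shift_wn:
  assumes "x \<in> Y"
  shows "wnorm p v (\<lambda>k. x (k + int n)) \<le> (cb ^ n) powr (1/p) * wnorm p v x"
proof -
  have "S (\<lambda>k. x (k + int n)) powr (1/p) \<le> (cb ^ n * S x) powr (1/p)"
    using shift_Y[OF assms] S_nonneg p0 by (intro powr_mono2) auto
  also have "\<dots> = (cb ^ n) powr (1/p) * wnorm p v x"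
    using cb1 S_nonneg by (simp add: powr_mult wn)
  finally show ?thesis by (simp add: wn)
qed

lemma trunc:
  assumes "x \<in> Y" "e > 0"
  shows "\<exists>F. finite F \<and> wnorm p v (x - (\<lambda>k. if k \<in> F then x k else 0)) < e"
proof -
  have sm: "T x summable_on UNIV" using assms by (simp add: inY)
  obtain F where F: "finite F" "dist (sum (T x) F) (S x) \<le> (e/2) powr p"
    using infsum_finite_approximation[OF sm, of "(e/2) powr p"] assms by (auto simp: S_def)
  define y where "y = (\<lambda>k. if k \<in> F then x k else 0)"
  have "S (x - y) = infsum (T x) (- F)"
    unfolding S_def by (rule infsum_cong_neutral) (auto simp: T_def y_def fun_diff_def)
  also have "\<dots> = S x - sum (T x) F"
  proof -
    have "S x = infsum (T x) (F \<union> - F)" by (simp add: S_def)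
    also have "\<dots> = infsum (T x) F + infsum (T x) (- F)"
      by (rule infsum_Un_disjoint) (auto intro: summable_on_subset_banach[OF sm] simp: F)
    finally show ?thesis using F by simp
  qed
  also have "\<dots> \<le> (e/2) powr p" using F by (simp add: dist_real_def)
  finally have "S (x - y) powr (1/p) \<le> ((e/2) powr p) powr (1/p)"
    using S_nonneg p0 by (intro powr_mono2) auto
  also have "\<dots> = e/2" using assms p0 by (simp add: powr_powr)
  finally show ?thesis using F assms by (auto simp: wn y_def)
qed

lemma fs_decay:
  assumes "\<And>k. k \<notin> {- int K..int K} \<Longrightarrow> y k = 0"
  shows "\<exists>D\<ge>0. \<forall>n. (\<lambda>k. y (k + int n)) \<in> Y \<and> S (\<lambda>k. y (k + int n)) \<le> D * v (int K - int n)"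
proof -
  define D where "D = cb ^ (2*K) * (\<Sum>j\<in>{- int K..int K}. \<bar>y j\<bar> powr p)"
  have D0: "D \<ge> 0" using cb1 by (simp add: D_def sum_nonneg)
  have fin: "finite {k. (\<lambda>j. \<bar>y j\<bar> powr p * v (j - int n)) k \<noteq> 0}" for n
  proof (rule finite_subset[of _ "{- int K..int K}"])
    show "{k. (\<lambda>j. \<bar>y j\<bar> powr p * v (j - int n)) k \<noteq> 0} \<subseteq> {- int K..int K}"
    proof
      fix k assume "k \<in> {k. (\<lambda>j. \<bar>y j\<bar> powr p * v (j - int n)) k \<noteq> 0}"
      then have "y k \<noteq> 0" by auto
      then show "k \<in> {- int K..int K}" using assms by blast
    qed
  qed simp
  have "(\<lambda>k. y (k + int n)) \<in> Y \<and> S (\<lambda>k. y (k + int n)) \<le> D * v (int K - int n)" for n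
  proof
    show "(\<lambda>k. y (k + int n)) \<in> Y"
      unfolding inY reidx using fin[of n] by (intro finite_nonzero_values_imp_summable_on) simp
    have "S (\<lambda>k. y (k + int n)) = infsum (\<lambda>j. \<bar>y j\<bar> powr p * v (j - int n)) {- int K..int K}"
      unfolding S_def reidx by (rule infsum_cong_neutral) (use assms in auto)
    also have "\<dots> = (\<Sum>j\<in>{- int K..int K}. \<bar>y j\<bar> powr p * v (j - int n))" by simp
    also have "\<dots> \<le> (\<Sum>j\<in>{- int K..int K}. \<bar>y j\<bar> powr p * (cb ^ (2*K) * v (int K - int n)))"
    proof (rule sum_mono)
      fix j assume j: "j \<in> {- int K..int K}"
      have "v (j - int n) \<le> cb ^ nat ((int K - int n) - (j - int n)) * v (int K - int n)"
        using j by (intro vmono) auto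
      also have "\<dots> \<le> cb ^ (2*K) * v (int K - int n)"
        using j cb1 vpos[of "int K - int n"] by (intro mult_right_mono power_increasing) auto
      finally show "\<bar>y j\<bar> powr p * v (j - int n) \<le> \<bar>y j\<bar> powr p * (cb ^ (2*K) * v (int K - int n))"
        by (intro mult_left_mono) auto
    qed
    also have "\<dots> = (\<Sum>j\<in>{- int K..int K}. \<bar>y j\<bar> powr p) * (cb ^ (2*K) * v (int K - int n))"
      by (rule sum_distrib_right[symmetric])
    also have "\<dots> = D * v (int K - int n)" by (simp add: D_def mult_ac)
    finally show "S (\<lambda>k. y (k + int n)) \<le> D * v (int K - int n)" .
  qed
  then show ?thesis using D0 by blast
qed

end



context wsp begin

definition e0 :: "int \<Rightarrow> real" where "e0 = (\<lambda>k. if k = 0 then 1 else 0)"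

lemma e0_Y: "e0 \<in> Y"
proof -
  have h: "\<And>k. k \<notin> {- int 0..int 0} \<Longrightarrow> e0 k = 0" by (simp add: e0_def)
  from fs_decay[of 0 e0, OF h] obtain D where "\<forall>n. (\<lambda>k. e0 (k + int n)) \<in> Y \<and> S (\<lambda>k. e0 (k + int n)) \<le> D * v (int 0 - int n)"
    by blast
  then have "(\<lambda>k. e0 (k + int 0)) \<in> Y" by blast
  then show ?thesis by simp
qed

lemma e0_nz: "e0 \<noteq> (\<lambda>_. 0)"
  by (metis e0_def zero_neq_one)

lemma S_e0_shift: "S (\<lambda>k. e0 (k + int n)) = v (- int n)"
proof -
  have "S (\<lambda>k. e0 (k + int n)) = infsum (T (\<lambda>k. e0 (k + int n))) {- int n}"
    unfolding S_def by (rule infsum_cong_neutral) (auto simp: T_def e0_def)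
  also have "\<dots> = v (- int n)" by (simp add: T_def e0_def)
  finally show ?thesis .
qed

lemma wn_e0_shift: "wnorm p v ((bshift ^^ n) e0) = v (- int n) powr (1/p)"
  by (simp add: bpow wn S_e0_shift)

lemma iii_ii:
  assumes "upper_dens A = 1" "filterlim (\<lambda>n. v (- int n)) (nhds 0) (inf sequentially (principal A))"
  shows "\<exists>x\<in>Y. x \<noteq> (\<lambda>_. 0) \<and> distr_near_zero p v x"
proof (intro bexI conjI)
  show "distr_near_zero p v e0"
    unfolding distr_near_zero_def wn_e0_shift
  proof (intro exI conjI)
    show "upper_dens A = 1" by fact
    show "((\<lambda>n. v (- int n) powr (1/p)) \<longlongrightarrow> 0) (inf sequentially (principal A))"
      using p0 vpos by (intro tendsto_zero_powrI[OF assms(2) tendsto_const]) (auto simp: less_imp_le)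
  qed
qed (use e0_Y e0_nz in auto)

lemma ii_iii:
  assumes x: "x \<in> Y" "x \<noteq> (\<lambda>_. 0)" and d: "distr_near_zero p v x"
  shows "\<exists>A. upper_dens A = 1 \<and> filterlim (\<lambda>n. v (- int n)) (nhds 0) (inf sequentially (principal A))"
proof -
  obtain A where A: "upper_dens A = 1"
    and lim: "filterlim (\<lambda>n. wnorm p v ((bshift ^^ n) x)) (nhds 0) (inf sequentially (principal A))"
    using d by (auto simp: distr_near_zero_def)
  obtain j where j: "x j \<noteq> 0" using x(2) by auto
  define i where "i = nat (- j)"
  define C where "C = cb ^ nat (j + int i) / \<bar>x j\<bar> powr p"
  have C0: "C \<ge> 0" using cb1 by (simp add: C_def)
  have key: "v (- int (n + i)) \<le> C * wnorm p v ((bshift ^^ n) x) powr p" for n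
  proof -
    have "T (\<lambda>k. x (k + int n)) (j - int n) \<le> S (\<lambda>k. x (k + int n))"
      by (rule T_le_S[OF shift_Y(1)[OF x(1)]])
    then have t: "\<bar>x j\<bar> powr p * v (j - int n) \<le> S (\<lambda>k. x (k + int n))" by (simp add: T_def)
    have "v (- int (n + i)) \<le> cb ^ nat ((j - int n) - (- int (n + i))) * v (j - int n)"
      by (rule vmono) (simp add: i_def)
    also have "(j - int n) - (- int (n + i)) = j + int i" by simp
    also have "v (j - int n) \<le> S (\<lambda>k. x (k + int n)) / \<bar>x j\<bar> powr p"
      using t j by (simp add: field_simps mult.commute)
    finally have "v (- int (n + i)) \<le> cb ^ nat (j + int i) * (S (\<lambda>k. x (k + int n)) / \<bar>x j\<bar> powr p)"
      using cb1 by (simp add: mult_left_mono)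
    then show ?thesis by (simp add: C_def bpow S_wn[symmetric])
  qed
  have lim2: "((\<lambda>n. C * wnorm p v ((bshift ^^ n) x) powr p) \<longlongrightarrow> 0) (inf sequentially (principal A))"
    using lim p0 wn_nonneg by (intro tendsto_mult_right_zero tendsto_zero_powrI) auto
  have nn: "0 \<le> C * wnorm p v ((bshift ^^ n) x) powr p" for n using C0 by simp
  define A' where "A' = (\<lambda>n. n + i) ` A"
  have "ud1 A'" by (rule ud_shift[of A 0 i]) (use A ud_iff A'_def in auto)
  then have A'1: "upper_dens A' = 1" by (simp add: ud_iff)
  have "((\<lambda>n. v (- int n)) \<longlongrightarrow> 0) (inf sequentially (principal A'))"
    unfolding tendsto_iff
  proof (intro allI impI)
    fix e :: real assume e: "e > 0"
    from lim2[unfolded tendsto_iff, rule_format, OF e]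
    obtain N where N: "\<And>n. n \<ge> N \<Longrightarrow> n \<in> A \<Longrightarrow> C * wnorm p v ((bshift ^^ n) x) powr p < e"
      by (auto simp: eventually_inf_principal eventually_sequentially dist_real_def nn)
    show "\<forall>\<^sub>F n in inf sequentially (principal A'). dist (v (- int n)) 0 < e"
      unfolding eventually_inf_principal eventually_sequentially
    proof (intro exI allI impI)
      fix m assume m: "m \<ge> N + i" "m \<in> A'"
      then obtain n where n: "n \<in> A" "m = n + i" by (auto simp: A'_def)
      then have "n \<ge> N" using m by simp
      have "v (- int m) \<le> C * wnorm p v ((bshift ^^ n) x) powr p" using key[of n] n by simp
      also have "\<dots> < e" using N[OF \<open>n \<ge> N\<close> n(1)] .
      finally show "dist (v (- int m)) 0 < e" using vpos[of "- int m"] by (simp add: dist_real_def)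
    qed
  qed
  then show ?thesis using A'1 by blast
qed


definition Ok :: "nat \<Rightarrow> real \<Rightarrow> (int \<Rightarrow> real) set" where
  "Ok m e = {x \<in> Y. wnorm p v ((bshift ^^ m) x) < e}"

lemma Ok_open: "openin MS.mtopology (Ok m e)"
  unfolding MS.openin_mtopology
proof (intro conjI allI impI)
  show "Ok m e \<subseteq> Y" by (auto simp: Ok_def)
  fix x assume x: "x \<in> Ok m e"
  then have xY: "x \<in> Y" and xl: "wnorm p v ((bshift ^^ m) x) < e" by (auto simp: Ok_def)
  define c where "c = (cb ^ m) powr (1/p)"
  have c0: "c > 0" using cb1 by (simp add: c_def)
  define r where "r = (e - wnorm p v ((bshift ^^ m) x)) / c"
  have r0: "r > 0" using xl c0 by (simp add: r_def)
  have "MS.mball x r \<subseteq> Ok m e"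
  proof
    fix y assume "y \<in> MS.mball x r"
    then have yY: "y \<in> Y" and dxy: "wnorm p v (x - y) < r" by auto
    have dyx: "wnorm p v (y - x) < r" using dxy MS.commute by metis
    have eq: "(\<lambda>k. y (k + int m)) = (\<lambda>k. (\<lambda>k. x (k + int m)) k + (\<lambda>k. (y - x) (k + int m)) k)"
      by (simp add: fun_diff_def)
    have "wnorm p v ((bshift ^^ m) y) \<le> wnorm p v (\<lambda>k. x (k + int m)) + wnorm p v (\<lambda>k. (y - x) (k + int m))"
      unfolding bpow eq by (rule mink[OF shift_Y(1)[OF xY] shift_Y(1)[OF Y_diff[OF yY xY]]])
    also have "wnorm p v (\<lambda>k. (y - x) (k + int m)) \<le> c * wnorm p v (y - x)"
      unfolding c_def by (rule shift_wn[OF Y_diff[OF yY xY]])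
    also have "c * wnorm p v (y - x) < c * r" using dyx c0 by simp
    also have "c * r = e - wnorm p v ((bshift ^^ m) x)" using c0 by (simp add: r_def)
    finally show "y \<in> Ok m e" using yY by (simp add: Ok_def bpow)
  qed
  then show "\<exists>r>0. MS.mball x r \<subseteq> Ok m e" using r0 by blast
qed

definition G :: "nat \<Rightarrow> nat \<Rightarrow> (int \<Rightarrow> real) set" where
  "G k N = {x \<in> Y. \<exists>n\<ge>N. real (card ({m. wnorm p v ((bshift ^^ m) x) < 1 / real (Suc k)} \<inter> {1..n}))
              > (1 - 1 / real (Suc k)) * real n}"

lemma G_eq: "G k N = \<Union>{\<Inter>((\<lambda>m. Ok m (1 / real (Suc k))) ` E) | n E. n \<ge> N \<and> E \<subseteq> {1..n} \<and>
                  real (card E) > (1 - 1 / real (Suc k)) * real n}"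
  (is "_ = \<Union>?U")
proof
  show "G k N \<subseteq> \<Union>?U"
  proof
    fix x assume "x \<in> G k N"
    then obtain n where x: "x \<in> Y" "n \<ge> N"
      "real (card ({m. wnorm p v ((bshift ^^ m) x) < 1 / real (Suc k)} \<inter> {1..n})) > (1 - 1 / real (Suc k)) * real n"
      by (auto simp: G_def)
    define E where "E = {m. wnorm p v ((bshift ^^ m) x) < 1 / real (Suc k)} \<inter> {1..n}"
    have "x \<in> \<Inter>((\<lambda>m. Ok m (1 / real (Suc k))) ` E)" using x by (auto simp: E_def Ok_def)
    moreover have "\<Inter>((\<lambda>m. Ok m (1 / real (Suc k))) ` E) \<in> ?U"
      using x by (auto simp: E_def)
    ultimately show "x \<in> \<Union>?U" by blast
  qed
  show "\<Union>?U \<subseteq> G k N"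
  proof
    fix x assume "x \<in> \<Union>?U"
    then obtain n E where nE: "n \<ge> N" "E \<subseteq> {1..n}" "real (card E) > (1 - 1 / real (Suc k)) * real n"
      and xE: "x \<in> \<Inter>((\<lambda>m. Ok m (1 / real (Suc k))) ` E)" by blast
    have "(1 - 1 / real (Suc k)) * real n \<ge> 0" by simp
    then have "card E > 0" using nE(3) by linarith
    then obtain m0 where "m0 \<in> E" by (metis card_gt_0_iff ex_in_conv)
    then have xY: "x \<in> Y" using xE by (auto simp: Ok_def)
    have "E \<subseteq> {m. wnorm p v ((bshift ^^ m) x) < 1 / real (Suc k)} \<inter> {1..n}"
      using xE nE(2) by (auto simp: Ok_def)
    then have "card E \<le> card ({m. wnorm p v ((bshift ^^ m) x) < 1 / real (Suc k)} \<inter> {1..n})"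
      by (rule card_mono[rotated]) auto
    then show "x \<in> G k N" using xY nE unfolding G_def
      by (intro CollectI conjI exI[of _ n]) auto
  qed
qed

lemma G_open: "openin MS.mtopology (G k N)"
  unfolding G_eq
proof (rule openin_Union)
  fix U assume "U \<in> {\<Inter>((\<lambda>m. Ok m (1 / real (Suc k))) ` E) | n E. n \<ge> N \<and> E \<subseteq> {1..n} \<and>
                  real (card E) > (1 - 1 / real (Suc k)) * real n}"
  then obtain n E where nE: "E \<subseteq> {1..n}" "real (card E) > (1 - 1 / real (Suc k)) * real n"
    and U: "U = \<Inter>((\<lambda>m. Ok m (1 / real (Suc k))) ` E)" by blast
  have "(1 - 1 / real (Suc k)) * real n \<ge> 0" by simp
  then have "card E > 0" using nE(2) by linarith
  then have "E \<noteq> {}" "finite E" by (auto simp: card_gt_0_iff)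
  then show "openin MS.mtopology U" unfolding U by (intro openin_INT2 Ok_open)
qed

lemma G_dense:
  assumes uA: "ud1 A" and lim: "filterlim (\<lambda>n. v (- int n)) (nhds 0) (inf sequentially (principal A))"
  shows "MS.mtopology closure_of (G k N) = Y"
proof -
  have "\<exists>y\<in>G k N. y \<in> MS.mball x r" if xY: "x \<in> Y" and r: "r > 0" for x r
  proof -
    obtain F where F: "finite F" "wnorm p v (x - (\<lambda>k. if k \<in> F then x k else 0)) < r"
      using trunc[OF xY r] by blast
    define y where "y = (\<lambda>k. if k \<in> F then x k else 0)"
    define K where "K = Max (insert 0 ((\<lambda>k. nat \<bar>k\<bar>) ` F))"
    have yK: "y j = 0" if "j \<notin> {- int K..int K}" for j
    proof (rule ccontr)
      assume "y j \<noteq> 0"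
      then have "j \<in> F" by (auto simp: y_def split: if_splits)
      then have "nat \<bar>j\<bar> \<le> K" unfolding K_def using F(1) by (intro Max_ge) auto
      then show False using that by auto
    qed
    obtain D where D0: "D \<ge> 0" and D: "\<And>n. (\<lambda>k. y (k + int n)) \<in> Y \<and> S (\<lambda>k. y (k + int n)) \<le> D * v (int K - int n)"
      using fs_decay[of K y, OF yK] by blast
    have yY: "y \<in> Y" using D[of 0] by simp
    define e where "e = 1 / real (Suc k)"
    have e0: "e > 0" by (simp add: e_def)
    define \<delta> where "\<delta> = e powr p / (D + 1)"
    have d0: "\<delta> > 0" using e0 D0 by (simp add: \<delta>_def)
    from lim[unfolded tendsto_iff, rule_format, OF d0]
    obtain m0 where m0: "\<And>m. m \<ge> m0 \<Longrightarrow> m \<in> A \<Longrightarrow> v (- int m) < \<delta>"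
      using vpos by (auto simp: eventually_inf_principal eventually_sequentially dist_real_def less_imp_le)
    define Ey where "Ey = {m. wnorm p v ((bshift ^^ m) y) < e}"
    have inE: "m + K \<in> Ey" if "m \<in> A" "m \<ge> m0" for m
    proof -
      have "S (\<lambda>k. y (k + int (m + K))) \<le> D * v (int K - int (m + K))" using D by blast
      also have "int K - int (m + K) = - int m" by simp
      also have "D * v (- int m) \<le> D * \<delta>" using m0[OF that(2,1)] D0 by (intro mult_left_mono) auto
      also have "D * \<delta> < (D + 1) * \<delta>" using d0 by simp
      also have "(D + 1) * \<delta> = e powr p" using D0 by (simp add: \<delta>_def)
      finally have "S (\<lambda>k. y (k + int (m + K))) powr (1/p) < (e powr p) powr (1/p)"
        using S_nonneg p0 by (intro powr_less_mono2) auto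
      also have "\<dots> = e" using e0 p0 by (simp add: powr_powr)
      finally show ?thesis by (simp add: Ey_def bpow wn)
    qed
    have "ud1 Ey" by (rule ud_shift[OF uA inE])
    then obtain n where n: "n \<ge> N" "real (card (Ey \<inter> {1..n})) > (1 - e) * real n"
      using e0 unfolding ud1_def by blast
    have "y \<in> G k N" using yY n by (auto simp: G_def Ey_def e_def)
    moreover have "y \<in> MS.mball x r" using xY yY F(2) by (simp add: y_def)
    ultimately show ?thesis by blast
  qed
  then show ?thesis unfolding MS.metric_closure_of by blast
qed

lemma G_inter:
  assumes xY: "x \<in> Y" and xG: "\<And>k N. x \<in> G k N"
  shows "distr_near_zero p v x"
proof -
  define E where "E k = {m. wnorm p v ((bshift ^^ m) x) < 1 / real (Suc k)}" for k
  have dec: "E (Suc k) \<subseteq> E k" for k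
  proof
    fix m assume "m \<in> E (Suc k)"
    moreover have "1 / real (Suc (Suc k)) \<le> 1 / real (Suc k)" by (simp add: frac_le)
    ultimately show "m \<in> E k" by (auto simp: E_def)
  qed
  have Emono: "j \<le> k \<Longrightarrow> E k \<subseteq> E j" for j k
    using lift_Suc_antimono_le[of E, OF dec] by blast
  have u: "ud1 (E k)" for k
    unfolding ud1_def
  proof (intro allI impI)
    fix e :: real and N assume e: "e > 0"
    obtain k0 :: nat where k0: "real k0 > 1 / e" using reals_Archimedean2 by blast
    define k' where "k' = max k k0"
    have "real (Suc k') > 1 / e" using k0 by (simp add: k'_def)
    then have ke: "1 / real (Suc k') < e" using e by (simp add: field_simps)
    from xG[of k' N] obtain n where n: "n \<ge> N"
      "real (card (E k' \<inter> {1..n})) > (1 - 1 / real (Suc k')) * real n"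
      by (auto simp: G_def E_def)
    have "card (E k' \<inter> {1..n}) \<le> card (E k \<inter> {1..n})"
      using Emono[of k k'] by (intro card_mono) (auto simp: k'_def)
    moreover have "(1 - e) * real n \<le> (1 - 1 / real (Suc k')) * real n"
      using ke by (intro mult_right_mono) auto
    ultimately have "real (card (E k \<inter> {1..n})) > (1 - e) * real n" using n(2) by linarith
    then show "\<exists>n\<ge>N. real (card (E k \<inter> {1..n})) > (1 - e) * real n" using n(1) by blast
  qed
  obtain A where A: "ud1 A" and tl: "\<And>k. \<exists>N. \<forall>n\<in>A. n \<ge> N \<longrightarrow> n \<in> E k"
    using diag[of E, OF dec u] by blast
  show ?thesis
    unfolding distr_near_zero_def
  proof (intro exI conjI)
    show "upper_dens A = 1" using A by (simp add: ud_iff)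
    show "((\<lambda>n. wnorm p v ((bshift ^^ n) x)) \<longlongrightarrow> 0) (inf sequentially (principal A))"
      unfolding tendsto_iff
    proof (intro allI impI)
      fix e :: real assume e: "e > 0"
      obtain k :: nat where k: "real k > 1 / e" using reals_Archimedean2 by blast
      have "real (Suc k) > 1 / e" using k by simp
      then have ke: "1 / real (Suc k) < e" using e by (simp add: field_simps)
      obtain N where N: "\<And>n. n \<in> A \<Longrightarrow> n \<ge> N \<Longrightarrow> n \<in> E k" using tl[of k] by blast
      show "\<forall>\<^sub>F n in inf sequentially (principal A). dist (wnorm p v ((bshift ^^ n) x)) 0 < e"
        unfolding eventually_inf_principal eventually_sequentially
      proof (intro exI allI impI)
        fix n assume "n \<ge> N" "n \<in> A"
        then have "wnorm p v ((bshift ^^ n) x) < 1 / real (Suc k)" using N by (auto simp: E_def)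
        then show "dist (wnorm p v ((bshift ^^ n) x)) 0 < e" using ke wn_nonneg by (simp add: dist_real_def)
      qed
    qed
  qed
qed

lemma iii_i:
  assumes "upper_dens A = 1" "filterlim (\<lambda>n. v (- int n)) (nhds 0) (inf sequentially (principal A))"
  shows "residual_in (lp_topology p v) {x \<in> Y. distr_near_zero p v x}"
  unfolding residual_in_def topo
proof (intro exI conjI ballI)
  have uA: "ud1 A" using assms(1) by (simp add: ud_iff)
  show "countable (range (\<lambda>(k, N). G k N))" by simp
  fix U assume "U \<in> range (\<lambda>(k, N). G k N)"
  then obtain k N where U: "U = G k N" by auto
  show "openin MS.mtopology U" unfolding U by (rule G_open)
  show "MS.mtopology closure_of U = topspace MS.mtopology"
    unfolding U using G_dense[OF uA assms(2)] by simp
next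
  show "topspace MS.mtopology \<inter> \<Inter> (range (\<lambda>(k, N). G k N)) \<subseteq> {x \<in> Y. distr_near_zero p v x}"
    using G_inter by auto
qed

lemma i_ii:
  assumes "residual_in (lp_topology p v) {x \<in> Y. distr_near_zero p v x}"
  shows "\<exists>x\<in>Y. x \<noteq> (\<lambda>_. 0) \<and> distr_near_zero p v x"
proof -
  obtain F where F: "countable F" "\<And>U. U \<in> F \<Longrightarrow> openin MS.mtopology U \<and> MS.mtopology closure_of U = Y"
    and sub: "Y \<inter> \<Inter>F \<subseteq> {x \<in> Y. distr_near_zero p v x}"
    using assms unfolding residual_in_def topo by auto
  have cl: "MS.mtopology closure_of \<Inter>F = Y"
    by (rule MS.metric_Baire_category[OF complete F(1)]) (use F(2) in auto)
  define r where "r = wnorm p v e0"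
  have r0: "r > 0"
  proof -
    have "r \<noteq> 0" using wn_zero[OF e0_Y] e0_nz by (auto simp: r_def)
    then show ?thesis using wn_nonneg by (simp add: r_def less_le)
  qed
  have "e0 \<in> MS.mtopology closure_of \<Inter>F" using cl e0_Y by simp
  then obtain y where y: "y \<in> \<Inter>F" "y \<in> MS.mball e0 r"
    unfolding MS.metric_closure_of using r0 by blast
  then have yY: "y \<in> Y" and d: "wnorm p v (e0 - y) < r" by auto
  have "y \<noteq> (\<lambda>_. 0)"
  proof
    assume "y = (\<lambda>_. 0)"
    then have "e0 - y = e0" by (simp add: fun_diff_def)
    then show False using d by (simp add: r_def)
  qed
  moreover have "distr_near_zero p v y" using sub yY y(1) by auto
  ultimately show ?thesis using yY by blast
qed

end

theorem mainTheorem9: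
  fixes p :: real and v :: "int \<Rightarrow> real"
  assumes "1 \<le> p"
    and "\<And>n. v n > 0"
    and "bdd_above (range (\<lambda>n. v n / v (n + 1)))"
  shows "(residual_in (lp_topology p v) {x \<in> lp_weighted p v. distr_near_zero p v x}
            \<longleftrightarrow> (\<exists>x\<in>lp_weighted p v. x \<noteq> (\<lambda>_. 0) \<and> distr_near_zero p v x))
       \<and> ((\<exists>x\<in>lp_weighted p v. x \<noteq> (\<lambda>_. 0) \<and> distr_near_zero p v x)
            \<longleftrightarrow> (\<exists>A. upper_dens A = 1 \<and>
                   filterlim (\<lambda>n. v (- int n)) (nhds 0) (inf sequentially (principal A))))"
proof -
  interpret wsp p v using assms by unfold_locales
  have a: "residual_in (lp_topology p v) {x \<in> lp_weighted p v. distr_near_zero p v x}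
           \<Longrightarrow> (\<exists>x\<in>lp_weighted p v. x \<noteq> (\<lambda>_. 0) \<and> distr_near_zero p v x)"
    by (rule i_ii)
  have b: "(\<exists>x\<in>lp_weighted p v. x \<noteq> (\<lambda>_. 0) \<and> distr_near_zero p v x)
           \<Longrightarrow> (\<exists>A. upper_dens A = 1 \<and> filterlim (\<lambda>n. v (- int n)) (nhds 0) (inf sequentially (principal A)))"
    using ii_iii by blast
  have c: "(\<exists>A. upper_dens A = 1 \<and> filterlim (\<lambda>n. v (- int n)) (nhds 0) (inf sequentially (principal A)))
           \<Longrightarrow> residual_in (lp_topology p v) {x \<in> lp_weighted p v. distr_near_zero p v x}"
    using iii_i by blast
  have d: "(\<exists>A. upper_dens A = 1 \<and> filterlim (\<lambda>n. v (- int n)) (nhds 0) (inf sequentially (principal A)))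
           \<Longrightarrow> (\<exists>x\<in>lp_weighted p v. x \<noteq> (\<lambda>_. 0) \<and> distr_near_zero p v x)"
    using iii_ii by blast
  show ?thesis using a b c d by blast
qed

end
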